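(* Let $r\ge 2$ and $t\ge1$ be integers and let $m$ be a positive integer with $t\le 2^m-1$. Let $\mathcal C_t^{(m)}$ be the binary linear code, with coordinates indexed by $\Omega_t^{(m)}$, having parity-check matrix $H_t^{(m)}$. Then $\mathcal C_t^{(m)}$ is an $(n,k,r,t)$-SLRC with $$n=r^m\sum_{s=0}^t\frac{1}{r^{|\mathrm{supp}_m(s)|}},\qquad k=r^m,$$ so that its rate is $\frac{k}{n}=\Big(\sum_{s=0}^t r^{-|\mathrm{supp}_m(s)|}\Big)^{-1}$.
   Context: Let $\mathbb Z_r=\{0,1,\dots,r-1\}$ and $\mathbb Z_{r+1}=\{0,1,\dots,r\}$, regarded merely as sets (so $\mathbb Z_r\subseteq\mathbb Z_{r+1}$). Elements of $\mathbb Z_{r+1}^m$ are written $\alpha=(i_m,i_{m-1},\dots,i_1)$; $i_\ell$ is the $\ell$-th coordinate from the right. Define $\mathbf U(\alpha)=\{\ell\in[m]: i_\ell=r\}$, $\mathbf T(\alpha)=\{\ell\in[m]: i_\ell\in\mathbb Z_r\}$ and $\mathcal L(\alpha)=\{(j_m,\dots,j_1)\in\mathbb Z_r^m: j_\ell=i_\ell \text{ for all }\ell\in\mathbf T(\alpha)\}$. For an integer $0\le s\le 2^m-1$ write $s=\sum_{\ell=1}^m\lambda_\ell2^{\ell-1}$ with $\lambda_\ell\in\{0,1\}$ and set $\mathrm{supp}_m(s)=\{\ell:\lambda_\ell=1\}$. Let $\Gamma_s^{(m)}=\{\alpha\in\mathbb Z_{r+1}^m:\mathbf U(\alpha)=\mathrm{supp}_m(s)\}$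 and $\Omega_s^{(m)}=\bigcup_{\ell=0}^s\Gamma_\ell^{(m)}$ (so $\Omega_0^{(m)}=\mathbb Z_r^m$). $H_t^{(m)}=(h_{\alpha,\beta})$ is the binary matrix with rows indexed by $\Omega_t^{(m)}\setminus\Omega_0^{(m)}$, columns indexed by $\Omega_t^{(m)}$, and $h_{\alpha,\beta}=1$ if $\beta\in\mathcal L(\alpha)\cup\{\alpha\}$, $h_{\alpha,\beta}=0$ otherwise. For a linear code $\mathcal C$ of length $n$ over a field $\mathbb F$ with coordinate set $I$ ($|I|=n$), a recovering set of a coordinate $i$ is a set $R\subseteq I\setminus\{i\}$ such that there are nonzero $a_j\in\mathbb F$ ($j\in R$) with $x_i=\sum_{j\in R}a_jx_j$ for all codewords $x$. $\mathcal C$ (of dimension $k$) is an $(n,k,r,t)$-SLRC if for every $E\subseteq I$ with $|E|\le t$, $E$ can be indexed as $\{i_1,\dots,i_{|E|}\}$ such that each $i_\ell$ has a recovering set $R_\ell\subseteq(I\setminus E)\cup\{i_1,\dots,i_{\ell-1}\}$ with $|R_\ell|\le r$. *)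

theory Defs
  imports Complex_Main "HOL-Library.Z2" "HOL-Library.Function_Algebras"
begin

text \<open>Words over a field F with coordinates in I are functions I => F (extended by 0
  outside I). Scalar multiplication is coordinatewise.\<close>

definition wscale :: "'f::field \<Rightarrow> ('i \<Rightarrow> 'f) \<Rightarrow> ('i \<Rightarrow> 'f)" where
  "wscale c x = (\<lambda>i. c * x i)"

definition words :: "'i set \<Rightarrow> ('i \<Rightarrow> 'f::field) set" where
  "words I = {x. \<forall>i. i \<notin> I \<longrightarrow> x i = 0}"

definition linear_code :: "'i set \<Rightarrow> ('i \<Rightarrow> 'f::field) set \<Rightarrow> bool" where
  "linear_code I C \<longleftrightarrow> finite I \<and> C \<subseteq> words I \<and> module.subspace wscale C"

definition code_dim :: "('i \<Rightarrow> 'f::field) set \<Rightarrow> nat" where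
  "code_dim C = vector_space.dim wscale C"

definition recovering_set ::
  "'i set \<Rightarrow> ('i \<Rightarrow> 'f::field) set \<Rightarrow> 'i \<Rightarrow> 'i set \<Rightarrow> bool" where
  "recovering_set I C i R \<longleftrightarrow> R \<subseteq> I - {i} \<and>
     (\<exists>a :: 'i \<Rightarrow> 'f. (\<forall>j\<in>R. a j \<noteq> 0) \<and> (\<forall>x\<in>C. x i = (\<Sum>j\<in>R. a j * x j)))"

definition is_SLRC ::
  "'i set \<Rightarrow> ('i \<Rightarrow> 'f::field) set \<Rightarrow> nat \<Rightarrow> nat \<Rightarrow> nat \<Rightarrow> nat \<Rightarrow> bool" where
  "is_SLRC I C n k r t \<longleftrightarrow> linear_code I C \<and> card I = n \<and> code_dim C = k \<and>
     (\<forall>E. E \<subseteq> I \<and> card E \<le> t \<longrightarrow>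
        (\<exists>e. distinct e \<and> set e = E \<and>
           (\<forall>l < length e. \<exists>R. recovering_set I C (e ! l) R \<and>
               R \<subseteq> (I - E) \<union> set (take l e) \<and> card R \<le> r)))"

text \<open>Vectors alpha = (i_m,...,i_1) in Z_q^m are functions nat => nat with
  alpha l = i_l for l in {1..m} (values < q) and alpha l = 0 otherwise.\<close>

definition Zvec :: "nat \<Rightarrow> nat \<Rightarrow> (nat \<Rightarrow> nat) set" where
  "Zvec m q = {\<alpha>. (\<forall>l\<in>{1..m}. \<alpha> l < q) \<and> (\<forall>l. l \<notin> {1..m} \<longrightarrow> \<alpha> l = 0)}"

definition Uset :: "nat \<Rightarrow> nat \<Rightarrow> (nat \<Rightarrow> nat) \<Rightarrow> nat set" where
  "Uset m r \<alpha> = {l\<in>{1..m}. \<alpha> l = r}"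

definition Tset :: "nat \<Rightarrow> nat \<Rightarrow> (nat \<Rightarrow> nat) \<Rightarrow> nat set" where
  "Tset m r \<alpha> = {l\<in>{1..m}. \<alpha> l < r}"

definition Lset :: "nat \<Rightarrow> nat \<Rightarrow> (nat \<Rightarrow> nat) \<Rightarrow> (nat \<Rightarrow> nat) set" where
  "Lset m r \<alpha> = {\<beta>\<in>Zvec m r. \<forall>l\<in>Tset m r \<alpha>. \<beta> l = \<alpha> l}"

text \<open>supp_m(s): positions l in {1..m} of the 1-bits lambda_l of s = sum lambda_l 2^(l-1).\<close>
definition supp :: "nat \<Rightarrow> nat \<Rightarrow> nat set" where
  "supp m s = {l\<in>{1..m}. odd (s div 2 ^ (l - 1))}"

definition Gamma :: "nat \<Rightarrow> nat \<Rightarrow> nat \<Rightarrow> (nat \<Rightarrow> nat) set" where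
  "Gamma m r s = {\<alpha>\<in>Zvec m (r + 1). Uset m r \<alpha> = supp m s}"

definition Omega :: "nat \<Rightarrow> nat \<Rightarrow> nat \<Rightarrow> (nat \<Rightarrow> nat) set" where
  "Omega m r s = (\<Union>l\<in>{0..s}. Gamma m r l)"

text \<open>Entries of H_t^(m): row alpha in Omega_t - Omega_0, column beta in Omega_t.\<close>
definition Hmat :: "nat \<Rightarrow> nat \<Rightarrow> (nat \<Rightarrow> nat) \<Rightarrow> (nat \<Rightarrow> nat) \<Rightarrow> bit" where
  "Hmat m r \<alpha> \<beta> = (if \<beta> \<in> Lset m r \<alpha> \<union> {\<alpha>} then 1 else 0)"

definition Ccode :: "nat \<Rightarrow> nat \<Rightarrow> nat \<Rightarrow> ((nat \<Rightarrow> nat) \<Rightarrow> bit) set" where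
  "Ccode m r t = {x \<in> words (Omega m r t).
     \<forall>\<alpha> \<in> Omega m r t - Omega m r 0. (\<Sum>\<beta>\<in>Omega m r t. Hmat m r \<alpha> \<beta> * x \<beta>) = 0}"

end

theory Submission
  imports Defs "HOL-Library.FuncSet"
begin

definition idx :: "nat set \<Rightarrow> nat" where "idx S = (\<Sum>l\<in>S. 2 ^ (l - 1))"

lemma bit_idx: "finite S \<Longrightarrow> 0 \<notin> S \<Longrightarrow> bit (idx S) n \<longleftrightarrow> Suc n \<in> S"
proof (induction S arbitrary: n rule: finite_induct)
  case empty then show ?case by (simp add: idx_def)
next
  case (insert l S)
  have e: "idx (insert l S) = 2 ^ (l - 1) + idx S" using insert by (simp add: idx_def)
  have d: "\<And>k. \<not> bit ((2::nat) ^ (l - 1)) k \<or> \<not> bit (idx S) k"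
    using insert by (auto simp: bit_exp_iff)
  have "bit (idx (insert l S)) n \<longleftrightarrow> bit ((2::nat) ^ (l - 1)) n \<or> bit (idx S) n"
    unfolding e by (rule bit_disjunctive_add_iff[OF d])
  also have "\<dots> \<longleftrightarrow> Suc n \<in> insert l S" using insert by (auto simp: bit_exp_iff)
  finally show ?case .
qed

lemma supp_bit: "supp m s = {l\<in>{1..m}. bit s (l - 1)}"
  by (simp add: supp_def bit_iff_odd)

lemma supp_sub: "supp m s \<subseteq> {1..m}" by (auto simp: supp_def)

lemma supp_idx: "S \<subseteq> {1..m} \<Longrightarrow> supp m (idx S) = S"
  unfolding supp_bit
  apply (subst bit_idx)
  using finite_subset apply auto[2]
  by auto

lemma idx_supp: assumes "s < 2 ^ m" shows "idx (supp m s) = s"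
proof (rule bit_eqI)
  fix n
  have fs: "finite (supp m s)" "0 \<notin> supp m s" using supp_sub[of m s] finite_subset by auto
  have "bit s n \<Longrightarrow> n < m"
  proof (rule ccontr)
    assume "bit s n" "\<not> n < m"
    have "(2::nat) ^ m \<le> 2 ^ n" using \<open>\<not> n < m\<close> by simp
    then have "s < 2 ^ n" using assms by linarith
    then have "s div 2 ^ n = 0" by (simp add: div_less)
    then show False using \<open>bit s n\<close> by (simp add: bit_iff_odd)
  qed
  then show "bit (idx (supp m s)) n \<longleftrightarrow> bit s n"
    using fs by (auto simp: bit_idx supp_bit)
qed

lemma idx_mono: "finite T \<Longrightarrow> S \<subseteq> T \<Longrightarrow> idx S \<le> idx T"
  unfolding idx_def by (rule sum_mono2) auto

lemma idx_insert: "finite S \<Longrightarrow> l \<notin> S \<Longrightarrow> idx (insert l S) = 2 ^ (l - 1) + idx S"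
  by (simp add: idx_def)

lemma count_funs:
  assumes "finite A" "\<And>l. l \<in> A \<Longrightarrow> finite (B l)"
  shows "finite {\<alpha>. (\<forall>l\<in>A. \<alpha> l \<in> B l) \<and> (\<forall>l. l \<notin> A \<longrightarrow> \<alpha> l = (0::nat))}"
    and "card {\<alpha>. (\<forall>l\<in>A. \<alpha> l \<in> B l) \<and> (\<forall>l. l \<notin> A \<longrightarrow> \<alpha> l = (0::nat))} = (\<Prod>l\<in>A. card (B l))"
proof -
  let ?F = "{\<alpha>. (\<forall>l\<in>A. \<alpha> l \<in> B l) \<and> (\<forall>l. l \<notin> A \<longrightarrow> \<alpha> l = (0::nat))}"
  let ?h = "\<lambda>g l. if l \<in> A then g l else (0::nat)"
  have eq: "?F = ?h ` (PiE A B)"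
  proof
    show "?F \<subseteq> ?h ` PiE A B"
    proof
      fix \<alpha> assume a: "\<alpha> \<in> ?F"
      then have "\<alpha> = ?h (restrict \<alpha> A)" by (auto simp: fun_eq_iff restrict_def)
      moreover have "restrict \<alpha> A \<in> PiE A B" using a by auto
      ultimately show "\<alpha> \<in> ?h ` PiE A B" by blast
    qed
  qed (auto simp: PiE_def Pi_def)
  have inj: "inj_on ?h (PiE A B)"
  proof (rule inj_onI)
    fix g g' assume g: "g \<in> PiE A B" "g' \<in> PiE A B" and e: "?h g = ?h g'"
    show "g = g'"
    proof (rule PiE_ext[OF g])
      fix l assume "l \<in> A" then show "g l = g' l" using fun_cong[OF e, of l] by simp
    qed
  qed
  show "finite ?F" unfolding eq using assms by (intro finite_imageI finite_PiE) auto
  show "card ?F = (\<Prod>l\<in>A. card (B l))" unfolding eq card_image[OF inj]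
    using assms by (simp add: card_PiE)
qed

lemma Zvec_alt: "Zvec m q = {\<alpha>. (\<forall>l\<in>{1..m}. \<alpha> l \<in> {..<q}) \<and> (\<forall>l. l \<notin> {1..m} \<longrightarrow> \<alpha> l = 0)}"
  by (auto simp: Zvec_def)

lemma finite_Zvec: "finite (Zvec m q)"
  unfolding Zvec_alt by (rule count_funs) auto

lemma card_Zvec: "card (Zvec m q) = q ^ m"
  unfolding Zvec_alt by (subst count_funs) auto

lemma Uset_sub: "Uset m r \<alpha> \<subseteq> {1..m}" by (auto simp: Uset_def)

lemma Omega_eq: assumes "t < 2 ^ m"
  shows "Omega m r t = {\<alpha> \<in> Zvec m (r+1). idx (Uset m r \<alpha>) \<le> t}"
proof
  show "Omega m r t \<subseteq> {\<alpha> \<in> Zvec m (r+1). idx (Uset m r \<alpha>) \<le> t}"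
  proof
    fix \<alpha> assume "\<alpha> \<in> Omega m r t"
    then obtain s where s: "s \<le> t" "\<alpha> \<in> Zvec m (r+1)" "Uset m r \<alpha> = supp m s"
      by (auto simp: Omega_def Gamma_def)
    then have "idx (Uset m r \<alpha>) = s" using idx_supp[of s m] assms by simp
    then show "\<alpha> \<in> {\<alpha> \<in> Zvec m (r+1). idx (Uset m r \<alpha>) \<le> t}" using s by simp
  qed
next
  show "{\<alpha> \<in> Zvec m (r+1). idx (Uset m r \<alpha>) \<le> t} \<subseteq> Omega m r t"
  proof
    fix \<alpha> assume a: "\<alpha> \<in> {\<alpha> \<in> Zvec m (r+1). idx (Uset m r \<alpha>) \<le> t}"
    have "supp m (idx (Uset m r \<alpha>)) = Uset m r \<alpha>" by (rule supp_idx[OF Uset_sub])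
    then show "\<alpha> \<in> Omega m r t" using a unfolding Omega_def Gamma_def by force
  qed
qed

lemma Omega0: "Omega m r 0 = Zvec m r"
proof -
  have "supp m 0 = {}" by (simp add: supp_def)
  then show ?thesis
    by (auto simp: Omega_def Gamma_def Uset_def Zvec_def less_Suc_eq)
qed

lemma Omega_mono: "s \<le> t \<Longrightarrow> Omega m r s \<subseteq> Omega m r t"
  unfolding Omega_def by (intro UN_mono) auto

lemma Lset_Zvec: "\<alpha> \<in> Zvec m r \<Longrightarrow> Lset m r \<alpha> = {\<alpha>}"
  by (auto simp: Lset_def Tset_def Zvec_def fun_eq_iff) (metis atLeastAtMost_iff)

lemma Lset_sub: "Lset m r \<alpha> \<subseteq> Zvec m r" by (auto simp: Lset_def)

lemma finite_Lset: "finite (Lset m r \<alpha>)" using finite_subset[OF Lset_sub finite_Zvec] .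

lemma finite_Omega: "finite (Omega m r t)"
  unfolding Omega_def Gamma_def using finite_Zvec by auto

lemma bit_self: "(a::bit) + a = 0" by (cases a) simp_all

lemma bit_eq_from_add: "(a::bit) + b = 0 \<Longrightarrow> a = b"
  by (cases a; cases b) simp_all

lemma row_sum:
  assumes "\<alpha> \<in> Omega m r t - Omega m r 0"
  shows "(\<Sum>\<beta>\<in>Omega m r t. Hmat m r \<alpha> \<beta> * x \<beta>) = x \<alpha> + (\<Sum>\<beta>\<in>Lset m r \<alpha>. x \<beta>)"
proof -
  have "(\<Sum>\<beta>\<in>Omega m r t. Hmat m r \<alpha> \<beta> * x \<beta>)
      = (\<Sum>\<beta>\<in>Omega m r t. if \<beta> \<in> Lset m r \<alpha> \<union> {\<alpha>} then x \<beta> else 0)"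
    by (rule sum.cong) (auto simp: Hmat_def)
  also have "\<dots> = (\<Sum>\<beta>\<in>Omega m r t \<inter> (Lset m r \<alpha> \<union> {\<alpha>}). x \<beta>)"
    by (rule sum.inter_restrict[symmetric]) (rule finite_Omega)
  also have "Omega m r t \<inter> (Lset m r \<alpha> \<union> {\<alpha>}) = insert \<alpha> (Lset m r \<alpha>)"
    using assms Lset_sub[of m r \<alpha>] Omega_mono[of 0 t m r] Omega0[of m r] by auto
  also have "(\<Sum>\<beta>\<in>insert \<alpha> (Lset m r \<alpha>). x \<beta>) = x \<alpha> + (\<Sum>\<beta>\<in>Lset m r \<alpha>. x \<beta>)"
    using assms Lset_sub[of m r \<alpha>] Omega0[of m r] finite_Lset by (subst sum.insert) auto
  finally show ?thesis .
qed

lemma C_char: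
  "x \<in> Ccode m r t \<longleftrightarrow> x \<in> words (Omega m r t) \<and>
     (\<forall>\<alpha>\<in>Omega m r t. x \<alpha> = (\<Sum>\<beta>\<in>Lset m r \<alpha>. x \<beta>))"
proof -
  have "(\<forall>\<alpha>\<in>Omega m r t - Omega m r 0. (\<Sum>\<beta>\<in>Omega m r t. Hmat m r \<alpha> \<beta> * x \<beta>) = 0)
     \<longleftrightarrow> (\<forall>\<alpha>\<in>Omega m r t. x \<alpha> = (\<Sum>\<beta>\<in>Lset m r \<alpha>. x \<beta>))"
  proof (intro iffI ballI)
    fix \<alpha> assume h: "\<forall>\<alpha>\<in>Omega m r t - Omega m r 0. (\<Sum>\<beta>\<in>Omega m r t. Hmat m r \<alpha> \<beta> * x \<beta>) = 0"
      and a: "\<alpha> \<in> Omega m r t"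
    show "x \<alpha> = (\<Sum>\<beta>\<in>Lset m r \<alpha>. x \<beta>)"
    proof (cases "\<alpha> \<in> Omega m r 0")
      case True
      then have "Lset m r \<alpha> = {\<alpha>}" using Lset_Zvec Omega0 by metis
      then show ?thesis by simp
    next
      case False
      then have "\<alpha> \<in> Omega m r t - Omega m r 0" using a by blast
      then have "x \<alpha> + (\<Sum>\<beta>\<in>Lset m r \<alpha>. x \<beta>) = 0" using h row_sum[of \<alpha> m r t x] by metis
      then show ?thesis by (rule bit_eq_from_add)
    qed
  next
    fix \<alpha> assume h: "\<forall>\<alpha>\<in>Omega m r t. x \<alpha> = (\<Sum>\<beta>\<in>Lset m r \<alpha>. x \<beta>)"
      and a: "\<alpha> \<in> Omega m r t - Omega m r 0"
    show "(\<Sum>\<beta>\<in>Omega m r t. Hmat m r \<alpha> \<beta> * x \<beta>) = 0"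
    proof -
      have "x \<alpha> = (\<Sum>\<beta>\<in>Lset m r \<alpha>. x \<beta>)" using h a by blast
      then show ?thesis unfolding row_sum[OF a] by (metis bit_self)
    qed
  qed
  then show ?thesis by (simp add: Ccode_def)
qed

definition line :: "nat \<Rightarrow> (nat \<Rightarrow> nat) \<Rightarrow> nat \<Rightarrow> (nat \<Rightarrow> nat) set" where
  "line r \<alpha> d = (\<lambda>j. \<alpha>(d:=j)) ` {0..r}"

definition good :: "nat \<Rightarrow> nat \<Rightarrow> nat \<Rightarrow> (nat \<Rightarrow> nat) \<Rightarrow> nat \<Rightarrow> bool" where
  "good m r t \<alpha> d \<longleftrightarrow> d \<in> {1..m} \<and> idx (insert d (Uset m r \<alpha>)) \<le> t"

lemma upd_Zvec: "\<alpha> \<in> Zvec m q \<Longrightarrow> d \<in> {1..m} \<Longrightarrow> j < q \<Longrightarrow> \<alpha>(d:=j) \<in> Zvec m q"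
  by (auto simp: Zvec_def)

lemma Uset_upd: "Uset m r (\<alpha>(d:=j)) \<subseteq> insert d (Uset m r \<alpha>)"
  by (auto simp: Uset_def)

lemma inj_upd: "inj_on (\<lambda>j. \<alpha>(d:=j)) A"
  by (rule inj_onI) (metis fun_upd_same)

lemma line_sub:
  assumes "t < 2 ^ m" "\<alpha> \<in> Omega m r t" "good m r t \<alpha> d" "j \<le> r"
  shows "\<alpha>(d:=j) \<in> Omega m r t"
proof -
  have a: "\<alpha> \<in> Zvec m (r+1)" using assms(1,2) Omega_eq by auto
  have l: "d \<in> {1..m}" using assms(3) good_def by auto
  have "idx (Uset m r (\<alpha>(d:=j))) \<le> idx (insert d (Uset m r \<alpha>))"
    by (rule idx_mono[OF _ Uset_upd]) (use Uset_sub[of m r \<alpha>] finite_subset l in auto)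
  then show ?thesis using assms upd_Zvec[OF a l, of j] Omega_eq[OF assms(1)] good_def by auto
qed

lemma alpha_in_line:
  assumes "t < 2 ^ m" "\<alpha> \<in> Omega m r t" "good m r t \<alpha> d"
  shows "\<alpha> \<in> line r \<alpha> d"
proof -
  have "\<alpha> \<in> Zvec m (r+1)" "d \<in> {1..m}" using assms Omega_eq[OF assms(1)] by (auto simp: good_def)
  then have "\<alpha> d \<le> r" unfolding Zvec_def by fastforce
  then show ?thesis unfolding line_def by (intro image_eqI[of _ _ "\<alpha> d"]) auto
qed

lemma card_line: "card (line r \<alpha> d) = Suc r"
  unfolding line_def by (subst card_image[OF inj_upd]) auto

lemma finite_line: "finite (line r \<alpha> d)" unfolding line_def by auto

lemma Lset_split:
  assumes "d \<in> {1..m}" "j < r"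
  shows "Lset m r (\<alpha>(d:=j)) = {\<delta> \<in> Lset m r (\<alpha>(d:=r)). \<delta> d = j}"
  using assms by (auto simp: Lset_def Tset_def)

lemma line_sum:
  assumes "t < 2 ^ m" "\<alpha> \<in> Omega m r t" "good m r t \<alpha> d" "x \<in> Ccode m r t"
  shows "(\<Sum>\<beta>\<in>line r \<alpha> d. x \<beta>) = 0"
proof -
  let ?g = "\<lambda>j. \<alpha>(d:=j)"
  have l: "d \<in> {1..m}" using assms(3) good_def by auto
  have xc: "\<And>\<beta>. \<beta> \<in> Omega m r t \<Longrightarrow> x \<beta> = (\<Sum>\<delta>\<in>Lset m r \<beta>. x \<delta>)"
    using assms(4) C_char by blast
  have "(\<Sum>\<beta>\<in>line r \<alpha> d. x \<beta>) = (\<Sum>j\<in>{0..r}. x (?g j))"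
    unfolding line_def by (subst sum.reindex[OF inj_upd]) simp
  also have "{0..r} = insert r {..<r}" by auto
  also have "(\<Sum>j\<in>insert r {..<r}. x (?g j)) = x (?g r) + (\<Sum>j<r. x (?g j))" by simp
  also have "x (?g r) = (\<Sum>j<r. x (?g j))"
  proof -
    have "x (?g r) = (\<Sum>\<delta>\<in>Lset m r (?g r). x \<delta>)" using xc line_sub[OF assms(1-3), of r] by simp
    also have "\<dots> = (\<Sum>j<r. \<Sum>\<delta>\<in>{\<delta> \<in> Lset m r (?g r). \<delta> d = j}. x \<delta>)"
    proof (rule sum.group[symmetric])
      show "finite (Lset m r (?g r))" by (rule finite_Lset)
      show "finite {..<r}" by simp
      show "(\<lambda>\<delta>. \<delta> d) ` Lset m r (?g r) \<subseteq> {..<r}"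
      proof
        fix y assume "y \<in> (\<lambda>\<delta>. \<delta> d) ` Lset m r (?g r)"
        then obtain \<delta> where "\<delta> \<in> Zvec m r" "y = \<delta> d" using Lset_sub by blast
        then show "y \<in> {..<r}" using l unfolding Zvec_def by auto
      qed
    qed
    also have "\<dots> = (\<Sum>j<r. x (?g j))"
    proof (rule sum.cong[OF refl])
      fix j assume "j \<in> {..<r}"
      then have j: "j < r" by simp
      have "x (?g j) = (\<Sum>\<delta>\<in>Lset m r (?g j). x \<delta>)" using xc line_sub[OF assms(1-3), of j] j by simp
      then show "(\<Sum>\<delta>\<in>{\<delta> \<in> Lset m r (?g r). \<delta> d = j}. x \<delta>) = x (?g j)"
        using Lset_split[OF l j, of \<alpha>] by simp
    qed
    finally show ?thesis .
  qed
  finally show ?thesis by (simp only: bit_self)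
qed

lemma recover:
  assumes "t < 2 ^ m" "\<alpha> \<in> Omega m r t" "good m r t \<alpha> d"
  shows "recovering_set (Omega m r t) (Ccode m r t) \<alpha> (line r \<alpha> d - {\<alpha>})"
    and "card (line r \<alpha> d - {\<alpha>}) = r"
proof -
  have ain: "\<alpha> \<in> line r \<alpha> d" by (rule alpha_in_line[OF assms])
  show "card (line r \<alpha> d - {\<alpha>}) = r" using ain card_line finite_line by simp
  have sub: "line r \<alpha> d \<subseteq> Omega m r t" using line_sub[OF assms] unfolding line_def by auto
  have rec: "\<forall>x\<in>Ccode m r t. x \<alpha> = (\<Sum>j\<in>line r \<alpha> d - {\<alpha>}. (\<lambda>_. 1::bit) j * x j)"
  proof
    fix x assume "x \<in> Ccode m r t"
    then have "(\<Sum>\<beta>\<in>line r \<alpha> d. x \<beta>) = 0" by (rule line_sum[OF assms])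
    then have "x \<alpha> + (\<Sum>\<beta>\<in>line r \<alpha> d - {\<alpha>}. x \<beta>) = 0"
      using sum.remove[OF finite_line ain, of x] by (simp only:)
    then have "x \<alpha> = (\<Sum>\<beta>\<in>line r \<alpha> d - {\<alpha>}. x \<beta>)" by (rule bit_eq_from_add)
    then show "x \<alpha> = (\<Sum>j\<in>line r \<alpha> d - {\<alpha>}. (\<lambda>_. 1::bit) j * x j)"
      by (simp only: mult_1)
  qed
  then show "recovering_set (Omega m r t) (Ccode m r t) \<alpha> (line r \<alpha> d - {\<alpha>})"
    unfolding recovering_set_def
  proof (intro conjI exI[of _ "\<lambda>_. 1::bit"])
    show "line r \<alpha> d - {\<alpha>} \<subseteq> Omega m r t - {\<alpha>}" using sub by blast
    show "\<forall>j\<in>line r \<alpha> d - {\<alpha>}. (1::bit) \<noteq> 0" by simp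
  qed (use rec in \<open>simp only:\<close>)
qed

lemma key:
  assumes tm: "t < 2 ^ m" and EI: "E \<subseteq> Omega m r t" and ne: "E \<noteq> {}" and cE: "card E \<le> t"
  shows "\<exists>\<alpha>\<in>E. \<exists>d. good m r t \<alpha> d \<and> line r \<alpha> d \<inter> E = {\<alpha>}"
proof (rule ccontr)
  assume nc: "\<not> ?thesis"
  have nf: "\<exists>\<beta>\<in>E. \<beta> \<in> line r \<alpha> d \<and> \<beta> \<noteq> \<alpha>" if a: "\<alpha> \<in> E" and g: "good m r t \<alpha> d" for \<alpha> d
  proof -
    have "\<alpha> \<in> line r \<alpha> d" using alpha_in_line[OF tm _ g] a EI by blast
    then have "line r \<alpha> d \<inter> E \<noteq> {\<alpha>}" using nc a g by blast
    then show ?thesis using \<open>\<alpha> \<in> line r \<alpha> d\<close> a by blast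
  qed
  have finE: "finite E" using finite_subset[OF EI finite_Omega] .
  obtain a0 where a0E: "a0 \<in> E" using ne by blast
  obtain \<alpha>0 where a0: "\<alpha>0 \<in> E" and amin: "\<And>\<beta>. \<beta> \<in> E \<Longrightarrow> idx (Uset m r \<alpha>0) \<le> idx (Uset m r \<beta>)"
  proof -
    from ex_has_least_nat[of "\<lambda>\<beta>. \<beta> \<in> E" a0 "\<lambda>\<beta>. idx (Uset m r \<beta>)", OF a0E]
    obtain x where "x \<in> E" "\<forall>y. y \<in> E \<longrightarrow> idx (Uset m r x) \<le> idx (Uset m r y)" by blast
    then show ?thesis using that by blast
  qed
  have a0Om: "\<alpha>0 \<in> Zvec m (r+1)" "idx (Uset m r \<alpha>0) \<le> t"
  proof -
    have "\<alpha>0 \<in> Omega m r t" using a0 EI by blast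
    then show "\<alpha>0 \<in> Zvec m (r+1)" "idx (Uset m r \<alpha>0) \<le> t" unfolding Omega_eq[OF tm] by blast+
  qed
  have finU: "\<And>\<beta>. finite (Uset m r \<beta>)" using Uset_sub finite_subset finite_atLeastAtMost by metis
  have U0: "Uset m r \<alpha>0 = {}"
  proof (rule ccontr)
    assume "Uset m r \<alpha>0 \<noteq> {}"
    then obtain d where dU: "d \<in> Uset m r \<alpha>0" by blast
    then have dm: "d \<in> {1..m}" and ad: "\<alpha>0 d = r" by (auto simp: Uset_def)
    have "insert d (Uset m r \<alpha>0) = Uset m r \<alpha>0" using dU by blast
    then have "good m r t \<alpha>0 d" using dm a0Om by (simp add: good_def)
    then obtain \<beta> where bE: "\<beta> \<in> E" and bl: "\<beta> \<in> line r \<alpha>0 d" and bne: "\<beta> \<noteq> \<alpha>0"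
      using nf[OF a0] by blast
    then obtain j where j: "\<beta> = \<alpha>0(d:=j)" unfolding line_def by blast
    have "j \<noteq> r" using bne j ad by auto
    then have Ub: "Uset m r \<beta> = Uset m r \<alpha>0 - {d}" using j by (auto simp: Uset_def)
    have "idx (Uset m r \<alpha>0) = idx (insert d (Uset m r \<alpha>0 - {d}))" using dU by (simp add: insert_absorb)
    also have "\<dots> = 2 ^ (d - 1) + idx (Uset m r \<beta>)" using Ub finU[of \<alpha>0] by (subst idx_insert) auto
    finally have "idx (Uset m r \<beta>) < idx (Uset m r \<alpha>0)" by simp
    then show False using amin[OF bE] by simp
  qed
  have step: "S \<subseteq> {1..m} \<longrightarrow> idx S \<le> t \<longrightarrow> (\<exists>\<beta>\<in>E. {l. \<beta> l \<noteq> \<alpha>0 l} = S \<and> Uset m r \<beta> \<subseteq> S)"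
    if "finite S" for S
    using that
  proof (induction S rule: finite_induct)
    case empty
    show ?case using a0 U0 by (intro impI bexI[of _ \<alpha>0]) auto
  next
    case (insert d S0)
    show ?case
    proof (intro impI)
      assume Sm: "insert d S0 \<subseteq> {1..m}" and St: "idx (insert d S0) \<le> t"
      have "idx S0 \<le> idx (insert d S0)" using insert(1) by (intro idx_mono) auto
      then obtain \<beta>0 where b0: "\<beta>0 \<in> E" "{l. \<beta>0 l \<noteq> \<alpha>0 l} = S0" "Uset m r \<beta>0 \<subseteq> S0"
        using insert(3) Sm St by auto
      have "idx (insert d (Uset m r \<beta>0)) \<le> idx (insert d S0)"
        using b0(3) insert(1) by (intro idx_mono) auto
      then have "good m r t \<beta>0 d" using Sm St by (simp add: good_def)
      then obtain \<beta> where bE: "\<beta> \<in> E" and bl: "\<beta> \<in> line r \<beta>0 d" and bne: "\<beta> \<noteq> \<beta>0"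
        using nf[OF b0(1)] by blast
      then obtain j where j: "\<beta> = \<beta>0(d:=j)" unfolding line_def by blast
      have jn: "j \<noteq> \<beta>0 d" using bne j by auto
      have "\<beta>0 d = \<alpha>0 d" using b0(2) insert(2) by blast
      then have "{l. \<beta> l \<noteq> \<alpha>0 l} = insert d S0" using j jn b0(2) by auto
      moreover have "Uset m r \<beta> \<subseteq> insert d S0" using j Uset_upd[of m r \<beta>0 d j] b0(3) by auto
      ultimately show "\<exists>\<beta>\<in>E. {l. \<beta> l \<noteq> \<alpha>0 l} = insert d S0 \<and> Uset m r \<beta> \<subseteq> insert d S0"
        using bE by blast
    qed
  qed
  let ?D = "\<lambda>\<beta>. {l. \<beta> l \<noteq> \<alpha>0 l}"
  have sub: "supp m ` {0..t} \<subseteq> ?D ` E"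
  proof
    fix S assume "S \<in> supp m ` {0..t}"
    then obtain s where s: "s \<le> t" "S = supp m s" by auto
    have "s < 2 ^ m" using s tm by linarith
    then have "idx S = s" using s idx_supp[of s m] by simp
    moreover have Sm: "S \<subseteq> {1..m}" using s supp_sub by simp
    moreover have "finite S" using Sm finite_subset finite_atLeastAtMost by metis
    ultimately obtain \<beta> where "\<beta> \<in> E" "?D \<beta> = S" using step[of S] s by blast
    then show "S \<in> ?D ` E" by blast
  qed
  have inj: "inj_on (supp m) {0..t}"
  proof (rule inj_onI)
    fix a b assume "a \<in> {0..t}" "b \<in> {0..t}" "supp m a = supp m b"
    then show "a = b" using idx_supp[of a m] idx_supp[of b m] tm
      by (metis atLeastAtMost_iff le_less_trans)
  qed
  have "card (supp m ` {0..t}) \<le> card (?D ` E)"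
    by (rule card_mono[OF _ sub]) (rule finite_imageI[OF finE])
  then have "card {0..t} \<le> card (?D ` E)" using card_image[OF inj] by simp
  also have "\<dots> \<le> card E" using finE by (rule card_image_le)
  finally show False using cE by simp
qed

lemma order_ex:
  assumes tm: "t < 2 ^ m"
  shows "E \<subseteq> Omega m r t \<Longrightarrow> card E = k \<Longrightarrow> k \<le> t \<Longrightarrow>
    \<exists>e. distinct e \<and> set e = E \<and>
      (\<forall>l < length e. \<exists>R. recovering_set (Omega m r t) (Ccode m r t) (e ! l) R \<and>
          R \<subseteq> (Omega m r t - E) \<union> set (take l e) \<and> card R \<le> r)"
proof (induction k arbitrary: E)
  case 0
  then have "E = {}" using finite_subset[OF _ finite_Omega] by auto
  then show ?case by (intro exI[of _ "[]"]) simp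
next
  case (Suc k)
  let ?I = "Omega m r t"
  have finE: "finite E" using Suc.prems finite_subset[OF _ finite_Omega] by blast
  then have ne: "E \<noteq> {}" using Suc.prems by auto
  obtain \<alpha> d where aE: "\<alpha> \<in> E" and g: "good m r t \<alpha> d" and li: "line r \<alpha> d \<inter> E = {\<alpha>}"
    using key[OF tm Suc.prems(1) ne] Suc.prems(2,3) by auto
  let ?E' = "E - {\<alpha>}"
  have "card ?E' = k" using Suc.prems(2) aE finE by simp
  then obtain e' where e': "distinct e'" "set e' = ?E'"
    "\<forall>l < length e'. \<exists>R. recovering_set ?I (Ccode m r t) (e' ! l) R \<and>
          R \<subseteq> (?I - ?E') \<union> set (take l e') \<and> card R \<le> r"
    using Suc.IH[of ?E'] Suc.prems by auto
  have aI: "\<alpha> \<in> ?I" using aE Suc.prems(1) by blast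
  let ?e = "\<alpha> # e'"
  have "\<forall>l < length ?e. \<exists>R. recovering_set ?I (Ccode m r t) (?e ! l) R \<and>
          R \<subseteq> (?I - E) \<union> set (take l ?e) \<and> card R \<le> r"
  proof (intro allI impI)
    fix l assume l: "l < length ?e"
    show "\<exists>R. recovering_set ?I (Ccode m r t) (?e ! l) R \<and>
          R \<subseteq> (?I - E) \<union> set (take l ?e) \<and> card R \<le> r"
    proof (cases l)
      case 0
      have "line r \<alpha> d \<subseteq> ?I" using line_sub[OF tm aI g] unfolding line_def by auto
      then have "line r \<alpha> d - {\<alpha>} \<subseteq> ?I - E" using li by blast
      then show ?thesis using 0 recover[OF tm aI g] by (intro exI[of _ "line r \<alpha> d - {\<alpha>}"]) auto
    next
      case (Suc k')
      then have "k' < length e'" using l by simp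
      then obtain R where R: "recovering_set ?I (Ccode m r t) (e' ! k') R"
        "R \<subseteq> (?I - ?E') \<union> set (take k' e')" "card R \<le> r" using e'(3) by blast
      have "R \<subseteq> (?I - E) \<union> set (take l ?e)" using R(2) Suc aI by auto
      then show ?thesis using R Suc by auto
    qed
  qed
  moreover have "distinct ?e" using e' by simp
  moreover have "set ?e = E" using e' aE by auto
  ultimately show ?case by blast
qed

lemma sum_fun_apply: "(\<Sum>v\<in>A. f v) x = (\<Sum>v\<in>A. f v x)"
  by (induction A rule: infinite_finite_induct) auto

lemma vs: "vector_space (wscale :: 'f::field \<Rightarrow> ('i \<Rightarrow> 'f) \<Rightarrow> ('i \<Rightarrow> 'f))"
  by unfold_locales (simp_all add: wscale_def fun_eq_iff algebra_simps)

declare add_bit_eq_xor[simp del] mult_bit_eq_and[simp del]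

definition ev :: "nat \<Rightarrow> nat \<Rightarrow> nat \<Rightarrow> (nat \<Rightarrow> nat) \<Rightarrow> (nat \<Rightarrow> nat) \<Rightarrow> bit" where
  "ev m r t \<gamma> = (\<lambda>\<beta>. if \<beta> \<in> Omega m r t \<and> \<gamma> \<in> Lset m r \<beta> then 1 else 0)"

lemma Z_sub: "Zvec m r \<subseteq> Omega m r t"
  using Omega_mono[of 0 t m r] Omega0[of m r] by simp

lemma ev_at: "\<gamma>' \<in> Zvec m r \<Longrightarrow> ev m r t \<gamma> \<gamma>' = (if \<gamma> = \<gamma>' then 1 else 0)"
  using Z_sub[of m r t] Lset_Zvec[of \<gamma>' m r] by (auto simp: ev_def)

lemma ev_in: assumes "\<gamma> \<in> Zvec m r" shows "ev m r t \<gamma> \<in> Ccode m r t"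
  unfolding C_char
proof
  show "ev m r t \<gamma> \<in> words (Omega m r t)" by (simp add: words_def ev_def)
  show "\<forall>\<alpha>\<in>Omega m r t. ev m r t \<gamma> \<alpha> = (\<Sum>\<beta>\<in>Lset m r \<alpha>. ev m r t \<gamma> \<beta>)"
  proof
    fix \<alpha> assume a: "\<alpha> \<in> Omega m r t"
    have "(\<Sum>\<beta>\<in>Lset m r \<alpha>. ev m r t \<gamma> \<beta>) = (\<Sum>\<beta>\<in>Lset m r \<alpha>. if \<gamma> = \<beta> then 1 else 0)"
      by (rule sum.cong[OF refl]) (use Lset_sub ev_at in blast)
    also have "\<dots> = (if \<gamma> \<in> Lset m r \<alpha> then 1 else 0)"
      using finite_Lset by (simp add: sum.delta)
    finally show "ev m r t \<gamma> \<alpha> = (\<Sum>\<beta>\<in>Lset m r \<alpha>. ev m r t \<gamma> \<beta>)" using a by (simp add: ev_def)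
  qed
qed

lemma C_subspace: "module.subspace wscale (Ccode m r t)"
proof -
  interpret V: vector_space "wscale :: bit \<Rightarrow> ((nat\<Rightarrow>nat)\<Rightarrow>bit) \<Rightarrow> _" by (rule vs)
  show ?thesis
  proof (rule V.subspaceI)
    show "0 \<in> Ccode m r t" unfolding C_char by (simp add: words_def)
  next
    fix x y assume x: "x \<in> Ccode m r t" and y: "y \<in> Ccode m r t"
    show "x + y \<in> Ccode m r t" using x y unfolding C_char by (simp add: words_def sum.distrib)
  next
    fix c :: bit and x assume x: "x \<in> Ccode m r t"
    show "wscale c x \<in> Ccode m r t" using x unfolding C_char
      by (simp add: words_def wscale_def sum_distrib_left)
  qed
qed

lemma C_dim: "code_dim (Ccode m r t) = r ^ m"
proof -
  interpret V: vector_space "wscale :: bit \<Rightarrow> ((nat\<Rightarrow>nat)\<Rightarrow>bit) \<Rightarrow> _" by (rule vs)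
  let ?Z = "Zvec m r" and ?C = "Ccode m r t"
  let ?B = "ev m r t ` ?Z"
  have inj: "inj_on (ev m r t) ?Z"
  proof (rule inj_onI)
    fix a b assume "a \<in> ?Z" "b \<in> ?Z" "ev m r t a = ev m r t b"
    then show "a = b" using ev_at[of a m r t a] ev_at[of a m r t b] by (metis one_neq_zero)
  qed
  have indep: "V.independent ?B"
  proof
    assume "V.dependent ?B"
    then obtain T u v where T: "finite T" "T \<subseteq> ?B" "(\<Sum>v\<in>T. wscale (u v) v) = 0" "v \<in> T" "u v \<noteq> 0"
      unfolding V.dependent_explicit by blast
    obtain \<gamma> where g: "\<gamma> \<in> ?Z" "v = ev m r t \<gamma>" using T by blast
    have "0 = (\<Sum>v\<in>T. wscale (u v) v) \<gamma>" using T(3) by simp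
    also have "\<dots> = (\<Sum>w\<in>T. u w * w \<gamma>)" by (simp add: sum_fun_apply wscale_def)
    also have "\<dots> = (\<Sum>w\<in>T. if w = v then u w else 0)"
    proof (rule sum.cong[OF refl])
      fix w assume "w \<in> T"
      then obtain \<gamma>' where "\<gamma>' \<in> ?Z" "w = ev m r t \<gamma>'" using T by blast
      then show "u w * w \<gamma> = (if w = v then u w else 0)"
        using g ev_at[of \<gamma> m r t \<gamma>'] inj_onD[OF inj, of \<gamma>' \<gamma>] by auto
    qed
    also have "\<dots> = u v" using T by (simp add: sum.delta')
    finally show False using T by simp
  qed
  have BC: "?B \<subseteq> ?C" using ev_in by blast
  have CB: "?C \<subseteq> V.span ?B"
  proof
    fix x assume x: "x \<in> ?C"
    have "x = (\<Sum>\<gamma>\<in>?Z. wscale (x \<gamma>) (ev m r t \<gamma>))"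
    proof
      fix \<beta>
      have "(\<Sum>\<gamma>\<in>?Z. wscale (x \<gamma>) (ev m r t \<gamma>)) \<beta> = (\<Sum>\<gamma>\<in>?Z. x \<gamma> * ev m r t \<gamma> \<beta>)"
        by (simp add: sum_fun_apply wscale_def)
      also have "\<dots> = x \<beta>"
      proof (cases "\<beta> \<in> Omega m r t")
        case False
        then show ?thesis using x unfolding C_char by (simp add: ev_def words_def)
      next
        case True
        have "(\<Sum>\<gamma>\<in>?Z. x \<gamma> * ev m r t \<gamma> \<beta>) = (\<Sum>\<gamma>\<in>?Z. if \<gamma> \<in> Lset m r \<beta> then x \<gamma> else 0)"
          using True by (intro sum.cong) (auto simp: ev_def)
        also have "\<dots> = (\<Sum>\<gamma>\<in>?Z \<inter> Lset m r \<beta>. x \<gamma>)"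
          by (rule sum.inter_restrict[symmetric]) (rule finite_Zvec)
        also have "?Z \<inter> Lset m r \<beta> = Lset m r \<beta>" using Lset_sub by blast
        also have "(\<Sum>\<gamma>\<in>Lset m r \<beta>. x \<gamma>) = x \<beta>" using x True unfolding C_char by simp
        finally show ?thesis .
      qed
      finally show "x \<beta> = (\<Sum>\<gamma>\<in>?Z. wscale (x \<gamma>) (ev m r t \<gamma>)) \<beta>" by simp
    qed
    also have "\<dots> \<in> V.span ?B"
      by (intro V.span_sum V.span_scale V.span_base) auto
    finally show "x \<in> V.span ?B" .
  qed
  have "V.span ?B = V.span ?C"
    unfolding V.span_eq using BC CB V.span_base by blast
  then have "V.dim ?C = card ?B" using indep by (rule V.dim_eq_card)
  also have "\<dots> = r ^ m" using card_image[OF inj] card_Zvec by simp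
  finally show ?thesis by (simp add: code_dim_def)
qed

lemma Gamma_alt:
  "Gamma m r s = {\<alpha>. (\<forall>l\<in>{1..m}. \<alpha> l \<in> (if l \<in> supp m s then {r} else {..<r})) \<and>
                     (\<forall>l. l \<notin> {1..m} \<longrightarrow> \<alpha> l = 0)}" (is "_ = ?R")
proof
  show "Gamma m r s \<subseteq> ?R"
  proof
    fix \<alpha> assume a: "\<alpha> \<in> Gamma m r s"
    then have z: "\<alpha> \<in> Zvec m (r+1)" and u: "Uset m r \<alpha> = supp m s" by (auto simp: Gamma_def)
    have "\<alpha> l \<in> (if l \<in> supp m s then {r} else {..<r})" if l: "l \<in> {1..m}" for l
    proof (cases "l \<in> supp m s")
      case True
      then have "l \<in> Uset m r \<alpha>" using u by simp
      then show ?thesis using True by (simp add: Uset_def)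
    next
      case False
      then have "l \<notin> Uset m r \<alpha>" using u by simp
      then have "\<alpha> l \<noteq> r" using l by (simp add: Uset_def)
      moreover have "\<alpha> l < r + 1" using z l by (simp add: Zvec_def)
      ultimately show ?thesis using False by simp
    qed
    then show "\<alpha> \<in> ?R" using z by (simp add: Zvec_def)
  qed
next
  show "?R \<subseteq> Gamma m r s"
  proof
    fix \<alpha> assume a: "\<alpha> \<in> ?R"
    have z: "\<alpha> \<in> Zvec m (r+1)" unfolding Zvec_def
    proof (intro CollectI conjI ballI allI impI)
      fix l assume l: "l \<in> {1..m}"
      then have "\<alpha> l \<in> (if l \<in> supp m s then {r} else {..<r})" using a by blast
      then show "\<alpha> l < r + 1" by (cases "l \<in> supp m s") auto
    next
      fix l assume "l \<notin> {1..m}" then show "\<alpha> l = 0" using a by blast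
    qed
    have "Uset m r \<alpha> = supp m s"
    proof
      show "Uset m r \<alpha> \<subseteq> supp m s"
      proof
        fix l assume l: "l \<in> Uset m r \<alpha>"
        then have l1: "l \<in> {1..m}" and lr: "\<alpha> l = r" by (auto simp: Uset_def)
        then have "\<alpha> l \<in> (if l \<in> supp m s then {r} else {..<r})" using a by blast
        then show "l \<in> supp m s" using lr by (cases "l \<in> supp m s") auto
      qed
      show "supp m s \<subseteq> Uset m r \<alpha>"
      proof
        fix l assume l: "l \<in> supp m s"
        then have "l \<in> {1..m}" using supp_sub by blast
        then have "\<alpha> l \<in> (if l \<in> supp m s then {r} else {..<r})" using a by blast
        then have "\<alpha> l = r" using l by simp
        then show "l \<in> Uset m r \<alpha>" using \<open>l \<in> {1..m}\<close> by (simp add: Uset_def)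
      qed
    qed
    then show "\<alpha> \<in> Gamma m r s" using z by (simp add: Gamma_def)
  qed
qed

lemma card_Gamma: "card (Gamma m r s) = r ^ (m - card (supp m s))"
proof -
  have "card (Gamma m r s) = (\<Prod>l\<in>{1..m}. card (if l \<in> supp m s then {r} else {..<r}))"
    unfolding Gamma_alt by (rule count_funs(2)) auto
  also have "\<dots> = (\<Prod>l\<in>{1..m}. if l \<in> supp m s then 1 else r)"
    by (rule prod.cong) auto
  also have "\<dots> = (\<Prod>l\<in>{1..m} \<inter> {l. l \<in> supp m s}. 1) * (\<Prod>l\<in>{1..m} \<inter> - {l. l \<in> supp m s}. r)"
    by (rule prod.If_cases) simp
  also have "\<dots> = r ^ card ({1..m} - supp m s)"
    by (simp add: Diff_eq)
  also have "card ({1..m} - supp m s) = m - card (supp m s)"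
    using supp_sub by (subst card_Diff_subset) (auto intro: finite_subset)
  finally show ?thesis .
qed

lemma finite_Gamma: "finite (Gamma m r s)"
  unfolding Gamma_alt by (rule count_funs(1)) auto

lemma card_Omega:
  assumes tm: "t < 2 ^ m"
  shows "card (Omega m r t) = (\<Sum>s=0..t. r ^ (m - card (supp m s)))"
proof -
  have "card (Omega m r t) = (\<Sum>s\<in>{0..t}. card (Gamma m r s))"
    unfolding Omega_def
  proof (rule card_UN_disjoint)
    show "\<forall>i\<in>{0..t}. \<forall>j\<in>{0..t}. i \<noteq> j \<longrightarrow> Gamma m r i \<inter> Gamma m r j = {}"
    proof (intro ballI impI)
      fix i j assume ij: "i \<in> {0..t}" "j \<in> {0..t}" "i \<noteq> j"
      have "supp m i \<noteq> supp m j"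
        using ij idx_supp[of i m] idx_supp[of j m] tm by (metis atLeastAtMost_iff le_less_trans)
      then show "Gamma m r i \<inter> Gamma m r j = {}" by (auto simp: Gamma_def)
    qed
  qed (auto simp: finite_Gamma)
  then show ?thesis by (simp add: card_Gamma)
qed

theorem theorem2:
  fixes r t m :: nat
  assumes "r \<ge> 2" and "t \<ge> 1" and "m \<ge> 1" and "t \<le> 2 ^ m - 1"
  shows "\<exists>n. real n = real r ^ m * (\<Sum>s=0..t. 1 / real r ^ card (supp m s)) \<and>
             is_SLRC (Omega m r t) (Ccode m r t) n (r ^ m) r t \<and>
             real (r ^ m) / real n = inverse (\<Sum>s=0..t. 1 / real r ^ card (supp m s))"
proof -
  have "(1::nat) \<le> 2 ^ m" by simp
  then have tm: "t < 2 ^ m" using assms(4) by linarith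
  let ?n = "\<Sum>s=0..t. r ^ (m - card (supp m s))"
  have r0: "real r \<noteq> 0" using assms(1) by simp
  have cs: "card (supp m s) \<le> m" for s
    using card_mono[OF _ supp_sub[of m s]] by simp
  have n: "real ?n = real r ^ m * (\<Sum>s=0..t. 1 / real r ^ card (supp m s))"
  proof -
    have "real ?n = (\<Sum>s=0..t. real r ^ (m - card (supp m s)))" by simp
    also have "\<dots> = (\<Sum>s=0..t. real r ^ m * (1 / real r ^ card (supp m s)))"
      by (rule sum.cong[OF refl]) (simp add: power_diff[OF r0 cs])
    also have "\<dots> = real r ^ m * (\<Sum>s=0..t. 1 / real r ^ card (supp m s))"
      by (simp add: sum_distrib_left)
    finally show ?thesis .
  qed
  have slrc: "is_SLRC (Omega m r t) (Ccode m r t) ?n (r ^ m) r t"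
    unfolding is_SLRC_def linear_code_def
  proof (intro conjI allI impI)
    show "finite (Omega m r t)" by (rule finite_Omega)
    show "Ccode m r t \<subseteq> words (Omega m r t)" unfolding Ccode_def by blast
    show "module.subspace wscale (Ccode m r t)" by (rule C_subspace)
    show "card (Omega m r t) = ?n" by (rule card_Omega[OF tm])
    show "code_dim (Ccode m r t) = r ^ m" by (rule C_dim)
  next
    fix E assume hE: "E \<subseteq> Omega m r t \<and> card E \<le> t"
    then have h1: "E \<subseteq> Omega m r t" and h2: "card E \<le> t" by blast+
    show "\<exists>e. distinct e \<and> set e = E \<and>
           (\<forall>l < length e. \<exists>R. recovering_set (Omega m r t) (Ccode m r t) (e ! l) R \<and>
               R \<subseteq> (Omega m r t - E) \<union> set (take l e) \<and> card R \<le> r)"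
      by (rule order_ex[OF tm h1 refl h2])
  qed
  have "real (r ^ m) / real ?n = inverse (\<Sum>s=0..t. 1 / real r ^ card (supp m s))"
  proof -
    have "real r ^ m \<noteq> 0" using r0 by simp
    then have "real r ^ m / (real r ^ m * (\<Sum>s=0..t. 1 / real r ^ card (supp m s)))
        = 1 / (\<Sum>s=0..t. 1 / real r ^ card (supp m s))"
      by (rule nonzero_divide_mult_cancel_left)
    then show ?thesis unfolding n of_nat_power inverse_eq_divide .
  qed
  then show ?thesis using n slrc by blast
qed

end
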